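(* Let $r>0$, $T>0$, $d\in\mathbb{N}$, $H\in(\tfrac12,1)$, fix $\nu\in(\tfrac12,H)$ and $\alpha\in(1-\nu,\tfrac12)$. Let $F,G:\mathcal{C}_r\to\mathbb{R}^d$ satisfy: (i) there exist constants $L_1,L_2>0$ such that for all $\xi,\eta\in\mathcal{C}_r$, $\|F(\xi)-F(\eta)\|\le L_1\|\xi-\eta\|_\infty$ and $\|F(\xi)\|\le L_2(1+\|\xi\|_\infty)$; (ii) $G$ is $C^1$ (Fréchet) and there exist constants $L_3,L_4>0$ such that for all $\xi,\eta\in\mathcal{C}_r$, $\|D^1G(\xi)\|\le L_3$ and $\|D^1G(\xi)-D^1G(\eta)\|\le L_4\|\xi-\eta\|_\infty$. For $\omega\in C^{\nu}([0,T],\mathbb{R})$ and $x\in C^{0,1-\alpha}([-r,T],\mathbb{R}^d)$ define, for $t\in[0,T]$, $$I(x)(t)=\int_0^t F(x_s)\,ds,\qquad J(x)(t)=\int_0^t G(x_s)\,d\omega(s).$$ Then $I(x)\in C^{0,1-\alpha}([0,T],\mathbb{R}^d)$ and $J(x)\in C^{0,1-\alpha}([0,T],\mathbb{R}^d)$.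
   Context: $\|\cdot\|$ denotes the Euclidean norm on $\mathbb{R}^d$ (and the operator norm for linear maps). $\mathcal{C}_r=C([-r,0],\mathbb{R}^d)$ with the sup norm $\|\eta\|_\infty=\max_{s\in[-r,0]}\|\eta(s)\|$; $D^1G(\xi)$ is the Fréchet derivative of $G$ at $\xi$, a bounded linear map $\mathcal{C}_r\to\mathbb{R}^d$. For a function $x$ on $[-r,T]$ and $s\in[0,T]$, $x_s\in\mathcal{C}_r$ is the segment $x_s(\theta)=x(s+\theta)$, $\theta\in[-r,0]$. For an interval $[a,b]$ and $\beta\in(0,1]$, $C^{\beta}([a,b],\mathbb{R}^d)$ is the space of $f:[a,b]\to\mathbb{R}^d$ with $\|f\|_\beta:=\sup_{t}\|f(t)\|+\sup_{a\le s<t\le b}\frac{\|f(t)-f(s)\|}{|t-s|^\beta}<\infty$. For $\delta>0$ put $\|f\|_{\beta,\delta,a,b}:=\sup_{a\le s<t\le b,\ |t-s|<\delta}\frac{\|f(t)-f(s)\|}{|t-s|^\beta}$, and $C^{0,\beta}([a,b],\mathbb{R}^d):=\{f\in C^\beta([a,b],\mathbb{R}^d):\lim_{\delta\to0}\|f\|_{\beta,\delta,a,b}=0\}$ (a separable closed subspace of $C^\beta$). The integral $\int_a^b f\,d\omega$ is the generalized Riemann–Stieltjes (Young) integral defined via fractional calculus: $\int_a^b f\,d\omega=(-1)^{\alpha}\int_a^b D^{\alpha}_{a+}f(s)\,D^{1-\alpha}_{b-}\omega_{b-}(s)\,ds$, where $\omega_{b-}(s)=\omega(s)-\omega(b)$,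 $D^{\alpha}_{a+}f(s)=\frac{1}{\Gamma(1-\alpha)}\big(\frac{f(s)}{(s-a)^\alpha}+\alpha\int_a^s\frac{f(s)-f(u)}{(s-u)^{1+\alpha}}du\big)$ and $D^{1-\alpha}_{b-}g(s)=\frac{(-1)^{1-\alpha}}{\Gamma(\alpha)}\big(\frac{g(s)}{(b-s)^{1-\alpha}}+(1-\alpha)\int_s^b\frac{g(s)-g(u)}{(u-s)^{2-\alpha}}du\big)$; for Hölder integrands and integrators whose exponents sum to more than $1$ it coincides with the limit of Riemann–Stieltjes sums. *)

theory Defs
  imports "HOL-Analysis.Analysis"
begin

text \<open>Hoelder spaces on an interval [a,b]; functions are total, only values on [a,b] matter.\<close>

definition hoelder_quots :: "real \<Rightarrow> real \<Rightarrow> real \<Rightarrow> real \<Rightarrow> (real \<Rightarrow> 'a::real_normed_vector) \<Rightarrow> real set" where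
  "hoelder_quots \<beta> \<delta> a b f =
     {norm (f t - f s) / \<bar>t - s\<bar> powr \<beta> | s t. a \<le> s \<and> s < t \<and> t \<le> b \<and> \<bar>t - s\<bar> < \<delta>}"

definition hoelder :: "real \<Rightarrow> real \<Rightarrow> real \<Rightarrow> (real \<Rightarrow> 'a::real_normed_vector) \<Rightarrow> bool" where
  "hoelder \<beta> a b f \<longleftrightarrow>
     bounded (f ` {a..b}) \<and>
     bdd_above {norm (f t - f s) / \<bar>t - s\<bar> powr \<beta> | s t. a \<le> s \<and> s < t \<and> t \<le> b}"

definition hoelder_semi_delta :: "real \<Rightarrow> real \<Rightarrow> real \<Rightarrow> real \<Rightarrow> (real \<Rightarrow> 'a::real_normed_vector) \<Rightarrow> real" where
  "hoelder_semi_delta \<beta> \<delta> a b f = Sup (hoelder_quots \<beta> \<delta> a b f)"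

definition hoelder0 :: "real \<Rightarrow> real \<Rightarrow> real \<Rightarrow> (real \<Rightarrow> 'a::real_normed_vector) \<Rightarrow> bool" where
  "hoelder0 \<beta> a b f \<longleftrightarrow>
     hoelder \<beta> a b f \<and> ((\<lambda>\<delta>. hoelder_semi_delta \<beta> \<delta> a b f) \<longlongrightarrow> 0) (at_right 0)"

text \<open>The space C_r = C([-r,0], R^d), elements represented by total functions
  (only the values on [-r,0] matter), with the sup norm over [-r,0].\<close>
definition Cr :: "real \<Rightarrow> (real \<Rightarrow> 'a::real_normed_vector) set" where
  "Cr r = {\<xi>. continuous_on {-r..0} \<xi>}"

definition supn :: "real \<Rightarrow> (real \<Rightarrow> 'a::real_normed_vector) \<Rightarrow> real" where
  "supn r \<xi> = Sup ((\<lambda>s. norm (\<xi> s)) ` {-r..0})"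

definition segment :: "(real \<Rightarrow> 'a) \<Rightarrow> real \<Rightarrow> real \<Rightarrow> 'a" where
  "segment x s = (\<lambda>\<theta>. x (s + \<theta>))"

text \<open>G : C_r -> R^d is C^1 in the Frechet sense with derivative DG (DG xi is a bounded
  linear map C_r -> R^d, depending continuously in operator norm on xi).\<close>
definition frechet_C1_on_Cr ::
  "real \<Rightarrow> ((real \<Rightarrow> 'a::real_normed_vector) \<Rightarrow> 'b::real_normed_vector)
     \<Rightarrow> ((real \<Rightarrow> 'a) \<Rightarrow> (real \<Rightarrow> 'a) \<Rightarrow> 'b) \<Rightarrow> bool" where
  "frechet_C1_on_Cr r G DG \<longleftrightarrow>
     (\<forall>\<xi>\<in>Cr r.
        (\<forall>h\<in>Cr r. \<forall>k\<in>Cr r. DG \<xi> (\<lambda>\<theta>. h \<theta> + k \<theta>) = DG \<xi> h + DG \<xi> k) \<and>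
        (\<forall>c. \<forall>h\<in>Cr r. DG \<xi> (\<lambda>\<theta>. c *\<^sub>R h \<theta>) = c *\<^sub>R DG \<xi> h) \<and>
        (\<exists>M. \<forall>h\<in>Cr r. norm (DG \<xi> h) \<le> M * supn r h) \<and>
        (\<forall>\<epsilon>>0. \<exists>\<delta>>0. \<forall>\<eta>\<in>Cr r. supn r (\<lambda>\<theta>. \<eta> \<theta> - \<xi> \<theta>) < \<delta> \<longrightarrow>
            norm (G \<eta> - G \<xi> - DG \<xi> (\<lambda>\<theta>. \<eta> \<theta> - \<xi> \<theta>)) \<le> \<epsilon> * supn r (\<lambda>\<theta>. \<eta> \<theta> - \<xi> \<theta>)) \<and>
        (\<forall>\<epsilon>>0. \<exists>\<delta>>0. \<forall>\<eta>\<in>Cr r. supn r (\<lambda>\<theta>. \<eta> \<theta> - \<xi> \<theta>) < \<delta> \<longrightarrow>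
            (\<forall>h\<in>Cr r. norm (DG \<eta> h - DG \<xi> h) \<le> \<epsilon> * supn r h)))"

text \<open>Generalized Riemann-Stieltjes (Young) integral via fractional calculus, with parameter alpha.\<close>
definition frac_left :: "real \<Rightarrow> (real \<Rightarrow> 'a::real_normed_vector) \<Rightarrow> real \<Rightarrow> real \<Rightarrow> 'a" where
  "frac_left \<alpha> f a s = (1 / Gamma (1 - \<alpha>)) *\<^sub>R
     ((1 / (s - a) powr \<alpha>) *\<^sub>R f s +
      \<alpha> *\<^sub>R integral {a..s} (\<lambda>u. (1 / (s - u) powr (1 + \<alpha>)) *\<^sub>R (f s - f u)))"

text \<open>D^{1-alpha}_{b-} omega_{b-}(s) without the factor (-1)^{1-alpha}.\<close>
definition frac_right_nosign :: "real \<Rightarrow> (real \<Rightarrow> real) \<Rightarrow> real \<Rightarrow> real \<Rightarrow> real" where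
  "frac_right_nosign \<alpha> \<omega> b s = (1 / Gamma \<alpha>) *
     ((\<omega> s - \<omega> b) / (b - s) powr (1 - \<alpha>) +
      (1 - \<alpha>) * integral {s..b} (\<lambda>u. ((\<omega> s - \<omega> b) - (\<omega> u - \<omega> b)) / (u - s) powr (2 - \<alpha>)))"

text \<open>The combined sign factor (-1)^alpha (-1)^{1-alpha} equals -1.\<close>
definition young_integral :: "real \<Rightarrow> (real \<Rightarrow> 'a::real_normed_vector) \<Rightarrow> (real \<Rightarrow> real) \<Rightarrow> real \<Rightarrow> real \<Rightarrow> 'a" where
  "young_integral \<alpha> f \<omega> a b =
     - integral {a..b} (\<lambda>s. frac_right_nosign \<alpha> \<omega> b s *\<^sub>R frac_left \<alpha> f a s)"

end

theory Submission
  imports Defs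
begin


lemma norm_int_bound:
  fixes g :: "real \<Rightarrow> 'b::euclidean_space"
  assumes "\<And>x. x \<in> S \<Longrightarrow> norm (g x) \<le> h x" "h integrable_on S"
  shows "norm (integral S g) \<le> integral S h"
proof (cases "g integrable_on S")
  case True thus ?thesis using assms integral_norm_bound_integral by blast
next
  case False
  hence "integral S g = 0" by (simp add: not_integrable_integral)
  moreover have "0 \<le> integral S h"
    by (rule integral_nonneg[OF assms(2)]) (use assms(1) norm_ge_zero order_trans in blast)
  ultimately show ?thesis by simp
qed

lemma pow_int_left:
  fixes a b p :: real
  assumes "p > -1" "a \<le> b"
  shows "((\<lambda>v. (v - a) powr p) has_integral (b - a) powr (p+1) / (p+1)) {a..b}"
proof -
  have "((\<lambda>x. x powr p) has_integral (b - a) powr (p+1) / (p+1)) (cbox 0 (b - a))"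
    using has_integral_powr_from_0[of p "b - a"] assms by simp
  from has_integral_affinity'[OF this, of 1 "-a"]
  show ?thesis by simp
qed

lemma pow_int_right:
  fixes a b p :: real
  assumes "p > -1" "a \<le> b"
  shows "((\<lambda>v. (b - v) powr p) has_integral (b - a) powr (p+1) / (p+1)) {a..b}"
proof -
  have "((\<lambda>v. (v - (-b)) powr p) has_integral ((-a) - (-b)) powr (p+1) / (p+1)) {-b..-a}"
    using pow_int_left[of p "-b" "-a"] assms by simp
  hence "((\<lambda>x. (-x - (-b)) powr p) has_integral ((-a) - (-b)) powr (p+1) / (p+1)) {- (-a)..- (-b)}"
    by (subst has_integral_reflect_real) 
  thus ?thesis by simp
qed

lemma hoelder_cont:
  fixes f :: "real \<Rightarrow> 'b::real_normed_vector"
  assumes b: "\<beta> > 0" and K: "\<And>s t. s \<in> S \<Longrightarrow> t \<in> S \<Longrightarrow> norm (f t - f s) \<le> K * \<bar>t - s\<bar> powr \<beta>"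
  shows "continuous_on S f"
  unfolding continuous_on_iff
proof (intro ballI allI impI)
  fix x e :: real assume x: "x \<in> S" and e: "e > 0"
  define K' where "K' = max K 1"
  have K'pos: "K' > 0" by (simp add: K'_def)
  define d where "d = (e / K') powr (1 / \<beta>)"
  have dpos: "d > 0" using e K'pos by (simp add: d_def)
  show "\<exists>d>0. \<forall>x'\<in>S. dist x' x < d \<longrightarrow> dist (f x') (f x) < e"
  proof (intro exI[of _ d] conjI ballI impI dpos)
    fix y assume y: "y \<in> S" and dy: "dist y x < d"
    have "dist (f y) (f x) \<le> K * \<bar>y - x\<bar> powr \<beta>" using K[OF x y] by (simp add: dist_norm)
    also have "\<dots> \<le> K' * \<bar>y - x\<bar> powr \<beta>" by (intro mult_right_mono) (auto simp: K'_def)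
    also have "\<bar>y - x\<bar> powr \<beta> < d powr \<beta>"
      using dy b by (intro powr_less_mono2) (auto simp: dist_real_def)
    hence "K' * \<bar>y - x\<bar> powr \<beta> < K' * d powr \<beta>" using K'pos by simp
    also have "d powr \<beta> = e / K'" using e K'pos b by (simp add: d_def powr_powr)
    also have "K' * (e / K') = e" using K'pos by simp
    finally show "dist (f y) (f x) < e" .
  qed
qed

lemma hoelder_get:
  fixes f :: "real \<Rightarrow> 'b::real_normed_vector"
  assumes "hoelder \<beta> a b f"
  shows "\<exists>K\<ge>0. \<forall>s t. a \<le> s \<longrightarrow> s \<le> b \<longrightarrow> a \<le> t \<longrightarrow> t \<le> b \<longrightarrow> norm (f t - f s) \<le> K * \<bar>t - s\<bar> powr \<beta>"
proof -
  from assms obtain K where K: "\<And>q. q \<in> {norm (f t - f s) / \<bar>t - s\<bar> powr \<beta> | s t. a \<le> s \<and> s < t \<and> t \<le> b} \<Longrightarrow> q \<le> K"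
    unfolding hoelder_def bdd_above_def by blast
  have main: "norm (f t - f s) \<le> max K 0 * \<bar>t - s\<bar> powr \<beta>" if "a \<le> s" "s < t" "t \<le> b" for s t
  proof -
    have "norm (f t - f s) / \<bar>t - s\<bar> powr \<beta> \<le> K" using K that by blast
    moreover have "\<bar>t - s\<bar> powr \<beta> > 0" using that by simp
    ultimately have "norm (f t - f s) \<le> K * \<bar>t - s\<bar> powr \<beta>" by (simp add: divide_le_eq)
    also have "\<dots> \<le> max K 0 * \<bar>t - s\<bar> powr \<beta>" by (intro mult_right_mono) auto
    finally show ?thesis .
  qed
  show ?thesis
  proof (intro exI[of _ "max K 0"] conjI allI impI)
    fix s t assume st: "a \<le> s" "s \<le> b" "a \<le> t" "t \<le> b"
    consider "s < t" | "s = t" | "t < s" by linarith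
    thus "norm (f t - f s) \<le> max K 0 * \<bar>t - s\<bar> powr \<beta>"
    proof cases
      case 1 thus ?thesis using main st by blast
    next
      case 2 thus ?thesis by simp
    next
      case 3 thus ?thesis using main[of t s] st by (simp add: norm_minus_commute abs_minus_commute)
    qed
  qed simp
qed

lemma hoelder0_of_bound:
  fixes g :: "real \<Rightarrow> 'b::real_normed_vector"
  assumes T: "T > 0" and bp: "0 < \<beta>" "\<beta> < p" and C: "C \<ge> 0"
    and inc: "\<And>s t. 0 \<le> s \<Longrightarrow> s < t \<Longrightarrow> t \<le> T \<Longrightarrow> norm (g t - g s) \<le> C * (t - s) powr p"
    and bd: "\<And>t. 0 \<le> t \<Longrightarrow> t \<le> T \<Longrightarrow> norm (g t) \<le> B"
  shows "hoelder0 \<beta> 0 T g"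
proof -
  have q: "norm (g t - g s) / \<bar>t - s\<bar> powr \<beta> \<le> C * (t - s) powr (p - \<beta>)"
    if "0 \<le> s" "s < t" "t \<le> T" for s t
  proof -
    have pos: "(t - s) powr \<beta> > 0" using that by simp
    have "norm (g t - g s) \<le> C * (t - s) powr p" using inc that by blast
    also have "(t - s) powr p = (t - s) powr (p - \<beta>) * (t - s) powr \<beta>"
      by (simp add: powr_add[symmetric])
    finally show ?thesis using pos that by (simp add: divide_le_eq mult.assoc)
  qed
  have hb: "hoelder \<beta> 0 T g"
    unfolding hoelder_def
  proof
    show "bounded (g ` {0..T})" unfolding bounded_iff using bd by (auto intro!: exI[of _ B])
    show "bdd_above {norm (g t - g s) / \<bar>t - s\<bar> powr \<beta> | s t. 0 \<le> s \<and> s < t \<and> t \<le> T}"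
      unfolding bdd_above_def
    proof (intro exI[of _ "C * T powr (p - \<beta>)"] ballI)
      fix q assume "q \<in> {norm (g t - g s) / \<bar>t - s\<bar> powr \<beta> | s t. 0 \<le> s \<and> s < t \<and> t \<le> T}"
      then obtain s t where st: "0 \<le> s" "s < t" "t \<le> T" and qd: "q = norm (g t - g s) / \<bar>t - s\<bar> powr \<beta>" by blast
      have "q \<le> C * (t - s) powr (p - \<beta>)" using q st qd by blast
      also have "\<dots> \<le> C * T powr (p - \<beta>)"
        using st bp C by (intro mult_left_mono powr_mono2) auto
      finally show "q \<le> C * T powr (p - \<beta>)" .
    qed
  qed
  have lim: "((\<lambda>\<delta>. hoelder_semi_delta \<beta> \<delta> 0 T g) \<longlongrightarrow> 0) (at_right 0)"
  proof (rule tendsto_sandwich[of "\<lambda>_. 0" _ _ "\<lambda>\<delta>. C * \<delta> powr (p - \<beta>)"])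
    have ev: "eventually (\<lambda>\<delta>. 0 < \<delta> \<and> \<delta> < T) (at_right (0::real))"
      using T by (simp add: eventually_at_right_field) (metis)
    have *: "0 \<le> hoelder_semi_delta \<beta> \<delta> 0 T g \<and> hoelder_semi_delta \<beta> \<delta> 0 T g \<le> C * \<delta> powr (p - \<beta>)"
      if d: "0 < \<delta>" "\<delta> < T" for \<delta>
    proof -
      let ?Q = "hoelder_quots \<beta> \<delta> 0 T g"
      have ub: "q \<le> C * \<delta> powr (p - \<beta>)" if "q \<in> ?Q" for q
      proof -
        from that obtain s t where st: "0 \<le> s" "s < t" "t \<le> T" "\<bar>t - s\<bar> < \<delta>" and qd: "q = norm (g t - g s) / \<bar>t - s\<bar> powr \<beta>"
          unfolding hoelder_quots_def by blast
        have "q \<le> C * (t - s) powr (p - \<beta>)" using q st qd by blast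
        also have "\<dots> \<le> C * \<delta> powr (p - \<beta>)"
          using st bp C by (intro mult_left_mono powr_mono2) auto
        finally show ?thesis .
      qed
      have mem: "norm (g (\<delta>/2) - g 0) / \<bar>\<delta>/2 - 0\<bar> powr \<beta> \<in> ?Q"
        unfolding hoelder_quots_def using d by (intro CollectI exI[of _ 0] exI[of _ "\<delta>/2"]) auto
      have bdd: "bdd_above ?Q" using ub by (auto simp: bdd_above_def)
      have "0 \<le> norm (g (\<delta>/2) - g 0) / \<bar>\<delta>/2 - 0\<bar> powr \<beta>" by simp
      also have "\<dots> \<le> Sup ?Q" by (rule cSup_upper[OF mem bdd])
      finally have "0 \<le> Sup ?Q" .
      moreover have "Sup ?Q \<le> C * \<delta> powr (p - \<beta>)"
        by (rule cSup_least) (use mem ub in auto)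
      ultimately show ?thesis unfolding hoelder_semi_delta_def by simp
    qed
    show "eventually (\<lambda>\<delta>. 0 \<le> hoelder_semi_delta \<beta> \<delta> 0 T g) (at_right 0)"
      using ev by eventually_elim (use * in blast)
    show "eventually (\<lambda>\<delta>. hoelder_semi_delta \<beta> \<delta> 0 T g \<le> C * \<delta> powr (p - \<beta>)) (at_right 0)"
      using ev by eventually_elim (use * in blast)
    show "((\<lambda>_. 0::real) \<longlongrightarrow> 0) (at_right 0)" by simp
    have "((\<lambda>\<delta>. C * \<delta> powr (p - \<beta>)) \<longlongrightarrow> C * 0 powr (p - \<beta>)) (at_right 0)"
      using bp by (intro tendsto_intros) (auto simp: eventually_at_right_field)
    thus "((\<lambda>\<delta>. C * \<delta> powr (p - \<beta>)) \<longlongrightarrow> 0) (at_right 0)" by simp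
  qed
  show ?thesis unfolding hoelder0_def using hb lim by blast
qed




lemma supn_ge:
  fixes h :: "real \<Rightarrow> 'a::real_normed_vector"
  assumes "h \<in> Cr r" "\<theta> \<in> {-r..0}"
  shows "norm (h \<theta>) \<le> supn r h"
proof -
  have "compact ((\<lambda>s. norm (h s)) ` {-r..0})"
    using assms(1) unfolding Cr_def
    by (intro compact_continuous_image continuous_on_norm) auto
  hence "bdd_above ((\<lambda>s. norm (h s)) ` {-r..0})" by (meson bounded_imp_bdd_above compact_imp_bounded)
  thus ?thesis unfolding supn_def using assms(2) by (intro cSUP_upper) auto
qed

lemma supn_le:
  fixes h :: "real \<Rightarrow> 'a::real_normed_vector"
  assumes "r \<ge> 0" "\<And>\<theta>. \<theta> \<in> {-r..0} \<Longrightarrow> norm (h \<theta>) \<le> B"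
  shows "supn r h \<le> B"
  unfolding supn_def using assms by (intro cSUP_least) auto

lemma supn_nonneg:
  fixes h :: "real \<Rightarrow> 'a::real_normed_vector"
  assumes "h \<in> Cr r" "r \<ge> 0"
  shows "0 \<le> supn r h"
  using supn_ge[OF assms(1), of 0] assms(2) by (meson atLeastAtMost_iff neg_le_0_iff_le norm_ge_zero order.trans order_refl)

lemma G_lip:
  fixes G :: "(real \<Rightarrow> 'a::real_normed_vector) \<Rightarrow> 'b::real_normed_vector"
  assumes r: "r > 0" and C1: "frechet_C1_on_Cr r G DG"
    and L3: "\<And>\<xi> h. \<xi> \<in> Cr r \<Longrightarrow> h \<in> Cr r \<Longrightarrow> norm (DG \<xi> h) \<le> L3 * supn r h"
    and xi: "\<xi> \<in> Cr r" and eta: "\<eta> \<in> Cr r"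
  shows "norm (G \<xi> - G \<eta>) \<le> L3 * supn r (\<lambda>\<theta>. \<xi> \<theta> - \<eta> \<theta>)"
proof -
  define h where "h = (\<lambda>\<theta>. \<xi> \<theta> - \<eta> \<theta>)"
  have hC: "h \<in> Cr r" using xi eta unfolding Cr_def h_def by (auto intro: continuous_intros)
  define z where "z = (\<lambda>\<tau>::real. (\<lambda>\<theta>. \<eta> \<theta> + \<tau> *\<^sub>R h \<theta>))"
  have zC: "z \<tau> \<in> Cr r" for \<tau> using eta hC unfolding Cr_def z_def by (auto intro!: continuous_on_add continuous_on_scaleR continuous_on_const)
  define S where "S = supn r h"
  have S0: "0 \<le> S" unfolding S_def using supn_nonneg[OF hC] r by simp
  have zdiff: "(\<lambda>\<theta>. z y \<theta> - z \<tau> \<theta>) = (\<lambda>\<theta>. (y - \<tau>) *\<^sub>R h \<theta>)" for y \<tau>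
    unfolding z_def by (auto simp: algebra_simps)
  have supz: "supn r (\<lambda>\<theta>. z y \<theta> - z \<tau> \<theta>) \<le> \<bar>y - \<tau>\<bar> * S" for y \<tau>
    unfolding zdiff S_def
    by (rule supn_le) (use r supn_ge[OF hC] in \<open>auto intro: mult_left_mono\<close>)
  have der: "((\<lambda>\<tau>. G (z \<tau>)) has_derivative (\<lambda>d. d *\<^sub>R DG (z \<tau>) h)) (at \<tau> within {0..1})" for \<tau>
    unfolding has_derivative_within_alt
  proof (intro conjI allI impI bounded_linear_scaleR_left)
    fix e :: real assume e: "e > 0"
    have "\<forall>\<epsilon>>0. \<exists>\<delta>>0. \<forall>\<eta>'\<in>Cr r. supn r (\<lambda>\<theta>. \<eta>' \<theta> - z \<tau> \<theta>) < \<delta> \<longrightarrow>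
            norm (G \<eta>' - G (z \<tau>) - DG (z \<tau>) (\<lambda>\<theta>. \<eta>' \<theta> - z \<tau> \<theta>)) \<le> \<epsilon> * supn r (\<lambda>\<theta>. \<eta>' \<theta> - z \<tau> \<theta>)"
      using C1 zC unfolding frechet_C1_on_Cr_def by blast
    moreover have eS: "e / (S + 1) > 0" using e S0 by simp
    ultimately obtain \<delta> where d: "\<delta> > 0" and dH0: "\<forall>\<eta>'\<in>Cr r. supn r (\<lambda>\<theta>. \<eta>' \<theta> - z \<tau> \<theta>) < \<delta> \<longrightarrow>
            norm (G \<eta>' - G (z \<tau>) - DG (z \<tau>) (\<lambda>\<theta>. \<eta>' \<theta> - z \<tau> \<theta>)) \<le> e / (S + 1) * supn r (\<lambda>\<theta>. \<eta>' \<theta> - z \<tau> \<theta>)"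
      by blast
    have dH: "\<And>\<eta>'. \<eta>' \<in> Cr r \<Longrightarrow> supn r (\<lambda>\<theta>. \<eta>' \<theta> - z \<tau> \<theta>) < \<delta> \<Longrightarrow>
            norm (G \<eta>' - G (z \<tau>) - DG (z \<tau>) (\<lambda>\<theta>. \<eta>' \<theta> - z \<tau> \<theta>)) \<le> e / (S + 1) * supn r (\<lambda>\<theta>. \<eta>' \<theta> - z \<tau> \<theta>)"
      using dH0 by blast
    show "\<exists>d>0. \<forall>y\<in>{0..1}. norm (y - \<tau>) < d \<longrightarrow> norm (G (z y) - G (z \<tau>) - (y - \<tau>) *\<^sub>R DG (z \<tau>) h) \<le> e * norm (y - \<tau>)"
    proof (intro exI[of _ "\<delta> / (S + 1)"] conjI ballI impI)
      show "\<delta> / (S + 1) > 0" using d S0 by simp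
      fix y :: real assume "y \<in> {0..1}" and yd: "norm (y - \<tau>) < \<delta> / (S + 1)"
      have sz: "supn r (\<lambda>\<theta>. z y \<theta> - z \<tau> \<theta>) \<le> \<bar>y - \<tau>\<bar> * S" by (rule supz)
      have "\<bar>y - \<tau>\<bar> * S \<le> \<bar>y - \<tau>\<bar> * (S + 1)" by (simp add: mult_left_mono)
      also have "\<dots> < \<delta>" using yd S0 by (simp add: field_simps)
      finally have lt: "supn r (\<lambda>\<theta>. z y \<theta> - z \<tau> \<theta>) < \<delta>" using sz by linarith
      have lin: "DG (z \<tau>) (\<lambda>\<theta>. z y \<theta> - z \<tau> \<theta>) = (y - \<tau>) *\<^sub>R DG (z \<tau>) h"
        unfolding zdiff using C1 zC hC unfolding frechet_C1_on_Cr_def by blast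
      have "norm (G (z y) - G (z \<tau>) - (y - \<tau>) *\<^sub>R DG (z \<tau>) h) \<le> e / (S + 1) * supn r (\<lambda>\<theta>. z y \<theta> - z \<tau> \<theta>)"
        using dH[OF zC lt] lin by simp
      also have "\<dots> \<le> e / (S + 1) * (\<bar>y - \<tau>\<bar> * S)" using sz e S0 by (intro mult_left_mono) auto
      also have "\<dots> = e * \<bar>y - \<tau>\<bar> * (S / (S + 1))" using S0 by (simp add: field_simps)
      also have "\<dots> \<le> e * \<bar>y - \<tau>\<bar> * 1" using S0 e by (intro mult_left_mono) auto
      finally show "norm (G (z y) - G (z \<tau>) - (y - \<tau>) *\<^sub>R DG (z \<tau>) h) \<le> e * norm (y - \<tau>)" by simp
    qed
  qed
  have on: "onorm (\<lambda>d. d *\<^sub>R DG (z \<tau>) h) \<le> L3 * S" for \<tau>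
  proof (rule onorm_le)
    fix d :: real
    have "norm (d *\<^sub>R DG (z \<tau>) h) = \<bar>d\<bar> * norm (DG (z \<tau>) h)" by simp
    also have "\<dots> \<le> \<bar>d\<bar> * (L3 * S)" unfolding S_def using L3[OF zC hC] by (intro mult_left_mono) auto
    finally show "norm (d *\<^sub>R DG (z \<tau>) h) \<le> L3 * S * norm d" by (simp add: mult.commute)
  qed
  have "norm (G (z 1) - G (z 0)) \<le> L3 * S * norm (1 - 0::real)"
    by (rule differentiable_bound[of "{0..1}", OF convex_real_interval(5) der on]) auto
  moreover have "z 1 = \<xi>" "z 0 = \<eta>" unfolding z_def h_def by auto
  ultimately show ?thesis unfolding S_def h_def by simp
qed




lemma seg_facts:
  fixes x :: "real \<Rightarrow> 'a::real_normed_vector"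
  assumes r: "r > 0" and b: "\<beta> > 0"
    and K: "\<And>s t. s \<in> {-r..T} \<Longrightarrow> t \<in> {-r..T} \<Longrightarrow> norm (x t - x s) \<le> K * \<bar>t - s\<bar> powr \<beta>"
  shows "\<And>s. s \<in> {0..T} \<Longrightarrow> segment x s \<in> Cr r"
    and "\<And>s t. s \<in> {0..T} \<Longrightarrow> t \<in> {0..T} \<Longrightarrow> supn r (\<lambda>\<theta>. segment x s \<theta> - segment x t \<theta>) \<le> K * \<bar>s - t\<bar> powr \<beta>"
proof -
  have cx: "continuous_on {-r..T} x" by (rule hoelder_cont[OF b K])
  fix s assume s: "s \<in> {0..T}"
  have "continuous_on {-r..0} (\<lambda>\<theta>. x (s + \<theta>))"
    by (rule continuous_on_compose2[OF cx]) (use s in \<open>auto intro!: continuous_intros\<close>)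
  thus "segment x s \<in> Cr r" unfolding Cr_def segment_def by simp
next
  fix s t assume s: "s \<in> {0..T}" and t: "t \<in> {0..T}"
  show "supn r (\<lambda>\<theta>. segment x s \<theta> - segment x t \<theta>) \<le> K * \<bar>s - t\<bar> powr \<beta>"
  proof (rule supn_le)
    fix \<theta> assume th: "\<theta> \<in> {-r..0}"
    have "norm (x (s + \<theta>) - x (t + \<theta>)) \<le> K * \<bar>(s + \<theta>) - (t + \<theta>)\<bar> powr \<beta>"
      by (rule K) (use s t th in auto)
    thus "norm (segment x s \<theta> - segment x t \<theta>) \<le> K * \<bar>s - t\<bar> powr \<beta>" unfolding segment_def by simp
  qed (use r in simp)
qed

lemma partI:
  fixes F :: "(real \<Rightarrow> 'a::euclidean_space) \<Rightarrow> 'a" and x :: "real \<Rightarrow> 'a"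
  assumes r: "r > 0" and T: "T > 0" and b: "0 < \<beta>" "\<beta> < 1"
    and K: "\<And>s t. s \<in> {-r..T} \<Longrightarrow> t \<in> {-r..T} \<Longrightarrow> norm (x t - x s) \<le> K * \<bar>t - s\<bar> powr \<beta>"
    and L1: "\<And>\<xi> \<eta>. \<xi> \<in> Cr r \<Longrightarrow> \<eta> \<in> Cr r \<Longrightarrow> norm (F \<xi> - F \<eta>) \<le> L1 * supn r (\<lambda>\<theta>. \<xi> \<theta> - \<eta> \<theta>)"
    and L1pos: "L1 \<ge> 0"
  shows "hoelder0 \<beta> 0 T (\<lambda>t. integral {0..t} (\<lambda>s. F (segment x s)))"
proof -
  define Fx where "Fx = (\<lambda>s. F (segment x s))"
  have hF: "norm (Fx t - Fx s) \<le> (L1 * K) * \<bar>t - s\<bar> powr \<beta>" if "s \<in> {0..T}" "t \<in> {0..T}" for s t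
  proof -
    have "norm (Fx t - Fx s) \<le> L1 * supn r (\<lambda>\<theta>. segment x t \<theta> - segment x s \<theta>)"
      unfolding Fx_def by (rule L1) (use seg_facts(1)[OF r b(1) K] that in auto)
    also have "\<dots> \<le> L1 * (K * \<bar>t - s\<bar> powr \<beta>)"
      by (intro mult_left_mono seg_facts(2)[OF r b(1) K]) (use that L1pos in auto)
    finally show ?thesis by simp
  qed
  have cF: "continuous_on {0..T} Fx" by (rule hoelder_cont[OF b(1) hF])
  obtain M where M: "\<And>s. s \<in> {0..T} \<Longrightarrow> norm (Fx s) \<le> M"
    using compact_imp_bounded[OF compact_continuous_image[OF cF compact_Icc]] unfolding bounded_iff by (metis atLeastAtMost_iff image_eqI)
  have M0: "M \<ge> 0" using M[of 0] T by (meson atLeastAtMost_iff less_imp_le norm_ge_zero order_trans order_refl)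
  have int: "Fx integrable_on {a..b}" if "0 \<le> a" "b \<le> T" for a b
    by (rule integrable_continuous_real) (rule continuous_on_subset[OF cF], use that in auto)
  have incr: "norm (integral {0..t} Fx - integral {0..s} Fx) \<le> M * (t - s) powr 1"
    if st: "0 \<le> s" "s < t" "t \<le> T" for s t
  proof -
    have "integral {0..t} Fx = integral {0..s} Fx + integral {s..t} Fx"
      by (rule Henstock_Kurzweil_Integration.integral_combine[symmetric]) (use st int in auto)
    hence "norm (integral {0..t} Fx - integral {0..s} Fx) = norm (integral {s..t} Fx)" by simp
    also have "\<dots> \<le> integral {s..t} (\<lambda>_. M)"
      by (rule norm_int_bound) (use M st in auto)
    also have "\<dots> = M * (t - s)" using st by simp
    finally show ?thesis using st by simp
  qed
  have bd: "norm (integral {0..t} Fx) \<le> M * T" if "0 \<le> t" "t \<le> T" for t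
  proof -
    have "norm (integral {0..t} Fx) \<le> integral {0..t} (\<lambda>_. M)"
      by (rule norm_int_bound) (use M that in auto)
    also have "\<dots> = M * t" using that by simp
    also have "\<dots> \<le> M * T" using that M0 by (simp add: mult_left_mono)
    finally show ?thesis .
  qed
  show ?thesis unfolding Fx_def[symmetric]
    by (rule hoelder0_of_bound[OF T b(1) _ M0 incr bd]) (use b in auto)
qed




lemma borel_lebesgue_on: "(g::real\<Rightarrow>'b::euclidean_space) \<in> borel_measurable borel \<Longrightarrow> g \<in> borel_measurable (lebesgue_on S)"
  by (simp add: measurable_completion measurable_restrict_space1)

lemma HK_eq_lborel:
  fixes k :: "real \<Rightarrow> 'b::euclidean_space"
  assumes "k \<in> borel_measurable borel" "k absolutely_integrable_on {a..b}"
  shows "integral {a..b} k = (LINT v|lborel. indicator {a..b} v *\<^sub>R k v)"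
proof -
  have "(LINT x:{a..b}|lebesgue. k x) = integral {a..b} k"
    using set_lebesgue_integral_eq_integral(2) assms(2) by (simp add: absolutely_integrable_on_def)
  moreover have "(\<lambda>v. indicator {a..b} v *\<^sub>R k v) \<in> borel_measurable lborel"
    using assms(1) by measurable
  ultimately show ?thesis unfolding set_lebesgue_integral_def
    by (simp add: integral_completion)
qed

lemma integrable_via_borel:
  fixes g gt :: "real \<Rightarrow> 'b::euclidean_space"
  assumes "gt \<in> borel_measurable borel" "\<And>x. x \<in> {a<..<b} \<Longrightarrow> g x = gt x"
    "\<And>x. x \<in> {a<..<b} \<Longrightarrow> norm (g x) \<le> h x" "h integrable_on {a<..<b}"
  shows "g integrable_on {a..b}"
proof -
  have "gt absolutely_integrable_on {a<..<b}"
    by (rule measurable_bounded_by_integrable_imp_absolutely_integrable[OF borel_lebesgue_on[OF assms(1)] _ assms(4)])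
       (use assms(2,3) in auto)
  hence "gt integrable_on {a<..<b}" using set_lebesgue_integral_eq_integral(1) by (simp add: absolutely_integrable_on_def)
  hence "g integrable_on {a<..<b}" by (rule integrable_eq) (use assms(2) in auto)
  thus ?thesis by (simp add: integrable_on_open_interval_real)
qed

lemma param_meas:
  fixes k :: "real \<Rightarrow> real \<Rightarrow> 'b::euclidean_space"
  assumes "(\<lambda>(u,v). k u v) \<in> borel_measurable (lborel \<Otimes>\<^sub>M lborel)"
  shows "(\<lambda>u. LINT v|lborel. k u v) \<in> borel_measurable borel"
  using lborel.borel_measurable_lebesgue_integral[OF assms] by (simp add: measurable_lborel1)

lemma beta_int:
  fixes a s :: real
  assumes a: "0 < a" "a < 1" and s: "s > 0"
  shows "((\<lambda>u. u powr (-a) * (s - u) powr (a - 1)) has_integral Beta (1 - a) a) {0..s}"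
proof -
  have B: "((\<lambda>t. t powr ((1 - a) - 1) * (1 - t) powr (a - 1)) has_integral Beta (1 - a) a) (cbox 0 1)"
    using has_integral_Beta_real[of "1 - a" a] a by simp
  have "((\<lambda>x. x powr ((1 - a) - 1) * (1 - x) powr (a - 1)) o (\<lambda>x. (1/s) *\<^sub>R x + 0) has_integral (Beta (1 - a) a /\<^sub>R (1/s) ^ DIM(real)))
           (cbox ((0 - 0) /\<^sub>R (1/s)) ((1 - 0) /\<^sub>R (1/s)))"
    unfolding o_def by (rule has_integral_affinity'[OF B]) (use s in simp)
  hence H: "((\<lambda>x. (x / s) powr (- a) * (1 - x / s) powr (a - 1)) has_integral (s * Beta (1 - a) a)) {0..s}"
    by (simp add: o_def field_simps)
  have eq: "(x / s) powr (- a) * (1 - x / s) powr (a - 1) = s * (x powr (-a) * (s - x) powr (a - 1))"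
    if "x \<in> {0..s}" for x
  proof -
    have "1 - x / s = (s - x) / s" using s by (simp add: field_simps)
    hence "(x / s) powr (- a) * (1 - x / s) powr (a - 1) = (x powr (-a) / s powr (-a)) * ((s - x) powr (a - 1) / s powr (a - 1))"
      using that s by (simp add: powr_divide)
    also have "\<dots> = (x powr (-a) * (s - x) powr (a - 1)) / (s powr (-a) * s powr (a - 1))" by simp
    also have "s powr (-a) * s powr (a - 1) = s powr (-1)" using s by (simp add: powr_add[symmetric])
    also have "\<dots> = 1 / s" using s by (simp add: powr_minus_divide)
    finally show ?thesis using s by simp
  qed
  have "((\<lambda>x. s * (x powr (-a) * (s - x) powr (a - 1))) has_integral (s * Beta (1 - a) a)) {0..s}"
    by (rule has_integral_eq[OF _ H]) (use eq in auto)
  hence "((\<lambda>x. (1/s) * (s * (x powr (-a) * (s - x) powr (a - 1)))) has_integral ((1/s) * (s * Beta (1 - a) a))) {0..s}"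
    by (rule has_integral_mult_right)
  thus ?thesis using s by simp
qed




locale yset =
  fixes f :: "real \<Rightarrow> 'a::euclidean_space" and \<omega> :: "real \<Rightarrow> real" and a \<nu> T Kf Mf Kw :: real
  assumes T: "T > 0" and a: "0 < a" "a < 1/2" and nu: "1 - a < \<nu>" "\<nu> < 1"
    and Kf: "Kf \<ge> 0" and Mf: "Mf \<ge> 0" and Kw: "Kw \<ge> 0"
    and hf: "\<And>s t. s \<in> {0..T} \<Longrightarrow> t \<in> {0..T} \<Longrightarrow> norm (f t - f s) \<le> Kf * \<bar>t - s\<bar> powr (1 - a)"
    and mf: "\<And>t. t \<in> {0..T} \<Longrightarrow> norm (f t) \<le> Mf"
    and hw: "\<And>s t. s \<in> {0..T} \<Longrightarrow> t \<in> {0..T} \<Longrightarrow> \<bar>\<omega> t - \<omega> s\<bar> \<le> Kw * \<bar>t - s\<bar> powr \<nu>"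
begin

definition "CA = (Mf + a * Kf * T powr (1 - a) / (1 - 2 * a)) / Gamma (1 - a)"
definition "CB = (Kw + (1 - a) * Kw / (\<nu> + a - 1)) / Gamma a"

lemma CA_nonneg: "CA \<ge> 0"
  unfolding CA_def using a Kf Mf T by (intro divide_nonneg_pos add_nonneg_nonneg Gamma_real_pos) auto

lemma CB_nonneg: "CB \<ge> 0"
  unfolding CB_def using a Kw nu by (intro divide_nonneg_pos add_nonneg_nonneg Gamma_real_pos) auto

lemma k_bound:
  assumes "0 \<le> v" "v \<le> u" "u \<le> T"
  shows "norm ((1 / (u - v) powr (1 + a)) *\<^sub>R (f u - f v)) \<le> Kf * (u - v) powr (- 2 * a)"
proof (cases "v = u")
  case True thus ?thesis using Kf by simp
next
  case False
  hence d: "u - v > 0" using assms by simp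
  have "norm ((1 / (u - v) powr (1 + a)) *\<^sub>R (f u - f v)) = norm (f u - f v) / (u - v) powr (1 + a)"
    using d by simp
  also have "\<dots> \<le> Kf * (u - v) powr (1 - a) / (u - v) powr (1 + a)"
    using hf[of v u] assms d by (intro divide_right_mono) auto
  also have "\<dots> = Kf * (u - v) powr ((1 - a) - (1 + a))"
    by (subst powr_diff) simp
  also have "\<dots> = Kf * (u - v) powr (- 2 * a)"
    by (rule arg_cong[where f="\<lambda>e. Kf * (u - v) powr e"]) simp
  finally show ?thesis .
qed

lemma A_bound:
  assumes u: "0 < u" "u \<le> T"
  shows "norm (frac_left a f 0 u) \<le> CA * u powr (- a)"
proof -
  define I where "I = integral {0..u} (\<lambda>v. (1 / (u - v) powr (1 + a)) *\<^sub>R (f u - f v))"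
  have hi: "((\<lambda>v. Kf * (u - v) powr (- 2 * a)) has_integral Kf * (u powr (- 2 * a + 1) / (- 2 * a + 1))) {0..u}"
    using has_integral_mult_right[OF pow_int_right[of "- 2 * a" 0 u]] a u by simp
  have "norm I \<le> integral {0..u} (\<lambda>v. Kf * (u - v) powr (- 2 * a))"
    unfolding I_def by (rule norm_int_bound) (use k_bound u hi in \<open>auto simp: has_integral_integrable\<close>)
  also have "\<dots> = Kf * (u powr (1 - 2 * a) / (1 - 2 * a))" using integral_unique[OF hi] by simp
  finally have nI0: "norm I \<le> Kf * (u powr (1 - 2 * a) / (1 - 2 * a))" .
  have "u powr (1 - 2 * a) = u powr (1 - a) * u powr (- a)" using u by (simp add: powr_add[symmetric])
  also have "\<dots> \<le> T powr (1 - a) * u powr (- a)" using u a by (intro mult_right_mono powr_mono2) auto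
  finally have "u powr (1 - 2 * a) \<le> T powr (1 - a) * u powr (- a)" .
  hence "Kf * (u powr (1 - 2 * a) / (1 - 2 * a)) \<le> Kf * (T powr (1 - a) * u powr (- a) / (1 - 2 * a))"
    using a Kf by (intro mult_left_mono divide_right_mono) auto
  with nI0 have nI: "norm I \<le> Kf * (T powr (1 - a) * u powr (- a) / (1 - 2 * a))" by linarith
  have "norm ((1 / (u - 0) powr a) *\<^sub>R f u + a *\<^sub>R I) \<le> u powr (- a) * Mf + a * norm I"
  proof -
    have "norm ((1 / (u - 0) powr a) *\<^sub>R f u) = u powr (- a) * norm (f u)"
      using u by (simp add: powr_minus_divide)
    also have "\<dots> \<le> u powr (- a) * Mf" using mf[of u] u by (intro mult_left_mono) auto
    moreover have "norm (a *\<^sub>R I) = a * norm I" using a by simp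
    ultimately show ?thesis using norm_triangle_ineq[of "(1 / (u - 0) powr a) *\<^sub>R f u" "a *\<^sub>R I"] by linarith
  qed
  also have "\<dots> \<le> u powr (- a) * Mf + a * (Kf * (T powr (1 - a) * u powr (- a) / (1 - 2 * a)))"
    using nI a by (intro add_left_mono mult_left_mono) auto
  also have "\<dots> = (Mf + a * Kf * T powr (1 - a) / (1 - 2 * a)) * u powr (- a)"
    by (simp add: field_simps)
  finally have *: "norm ((1 / (u - 0) powr a) *\<^sub>R f u + a *\<^sub>R I) \<le> (Mf + a * Kf * T powr (1 - a) / (1 - 2 * a)) * u powr (- a)" .
  have G: "Gamma (1 - a) > 0" using a by (intro Gamma_real_pos) auto
  have "norm (frac_left a f 0 u) = norm ((1 / (u - 0) powr a) *\<^sub>R f u + a *\<^sub>R I) / Gamma (1 - a)"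
    unfolding frac_left_def I_def using G by simp
  also have "\<dots> \<le> (Mf + a * Kf * T powr (1 - a) / (1 - 2 * a)) * u powr (- a) / Gamma (1 - a)"
    using * G by (intro divide_right_mono) auto
  also have "\<dots> = CA * u powr (- a)" unfolding CA_def by simp
  finally show ?thesis .
qed

lemma q_bound:
  assumes "0 \<le> u" "u \<le> v" "v \<le> T"
  shows "\<bar>\<omega> u - \<omega> v\<bar> / (v - u) powr (2 - a) \<le> Kw * (v - u) powr (\<nu> + a - 2)"
proof (cases "v = u")
  case True thus ?thesis using Kw by simp
next
  case False
  hence d: "v - u > 0" using assms by simp
  have "\<bar>\<omega> u - \<omega> v\<bar> / (v - u) powr (2 - a) \<le> Kw * (v - u) powr \<nu> / (v - u) powr (2 - a)"
    using hw[of v u] assms d by (intro divide_right_mono) (auto simp: abs_minus_commute)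
  also have "\<dots> = Kw * (v - u) powr (\<nu> - (2 - a))"
    by (subst powr_diff) simp
  also have "\<dots> = Kw * (v - u) powr (\<nu> + a - 2)"
    by (rule arg_cong[where f="\<lambda>e. Kw * (v - u) powr e"]) simp
  finally show ?thesis .
qed

lemma B_bound:
  assumes u: "0 \<le> u" "u < t" "t \<le> T"
  shows "\<bar>frac_right_nosign a \<omega> t u\<bar> \<le> CB * (t - u) powr (\<nu> + a - 1)"
proof -
  define I where "I = integral {u..t} (\<lambda>v. ((\<omega> u - \<omega> t) - (\<omega> v - \<omega> t)) / (v - u) powr (2 - a))"
  have hi: "((\<lambda>v. Kw * (v - u) powr (\<nu> + a - 2)) has_integral Kw * ((t - u) powr (\<nu> + a - 2 + 1) / (\<nu> + a - 2 + 1))) {u..t}"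
    using has_integral_mult_right[OF pow_int_left[of "\<nu> + a - 2" u t]] nu u by simp
  have pw: "norm (((\<omega> u - \<omega> t) - (\<omega> v - \<omega> t)) / (v - u) powr (2 - a)) \<le> Kw * (v - u) powr (\<nu> + a - 2)"
    if "v \<in> {u..t}" for v
  proof -
    have "norm (((\<omega> u - \<omega> t) - (\<omega> v - \<omega> t)) / (v - u) powr (2 - a)) = \<bar>\<omega> u - \<omega> v\<bar> / (v - u) powr (2 - a)"
      by (simp add: abs_divide)
    also have "\<dots> \<le> Kw * (v - u) powr (\<nu> + a - 2)" by (rule q_bound) (use that u in auto)
    finally show ?thesis .
  qed
  have "norm I \<le> integral {u..t} (\<lambda>v. Kw * (v - u) powr (\<nu> + a - 2))"
    unfolding I_def by (rule norm_int_bound[OF pw]) (use hi in \<open>auto simp: has_integral_integrable\<close>)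
  hence "\<bar>I\<bar> \<le> integral {u..t} (\<lambda>v. Kw * (v - u) powr (\<nu> + a - 2))" by simp
  also have "\<dots> = Kw * ((t - u) powr (\<nu> + a - 1) / (\<nu> + a - 1))" using integral_unique[OF hi] by simp
  finally have nI: "\<bar>I\<bar> \<le> Kw * ((t - u) powr (\<nu> + a - 1) / (\<nu> + a - 1))" .
  have f1: "\<bar>(\<omega> u - \<omega> t) / (t - u) powr (1 - a)\<bar> \<le> Kw * (t - u) powr (\<nu> + a - 1)"
  proof -
    have "\<bar>(\<omega> u - \<omega> t) / (t - u) powr (1 - a)\<bar> = \<bar>\<omega> u - \<omega> t\<bar> / (t - u) powr (1 - a)"
      using u by simp
    also have "\<dots> \<le> Kw * (t - u) powr \<nu> / (t - u) powr (1 - a)"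
      using hw[of u t] u by (intro divide_right_mono) auto
    also have "\<dots> = Kw * (t - u) powr (\<nu> - (1 - a))"
      by (subst powr_diff) simp
    also have "\<dots> = Kw * (t - u) powr (\<nu> + a - 1)"
      by (rule arg_cong[where f="\<lambda>e. Kw * (t - u) powr e"]) simp
    finally show ?thesis .
  qed
  have G: "Gamma a > 0" using a by (intro Gamma_real_pos) auto
  have "\<bar>frac_right_nosign a \<omega> t u\<bar> = \<bar>(\<omega> u - \<omega> t) / (t - u) powr (1 - a) + (1 - a) * I\<bar> / Gamma a"
    unfolding frac_right_nosign_def I_def using G by (simp add: abs_mult)
  also have "\<dots> \<le> (Kw * (t - u) powr (\<nu> + a - 1) + (1 - a) * (Kw * ((t - u) powr (\<nu> + a - 1) / (\<nu> + a - 1)))) / Gamma a"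
  proof (intro divide_right_mono)
    have "\<bar>(1 - a) * I\<bar> = (1 - a) * \<bar>I\<bar>" using a by (simp add: abs_mult)
    also have "\<dots> \<le> (1 - a) * (Kw * ((t - u) powr (\<nu> + a - 1) / (\<nu> + a - 1)))"
      using nI a by (intro mult_left_mono) auto
    finally have "\<bar>(1 - a) * I\<bar> \<le> (1 - a) * (Kw * ((t - u) powr (\<nu> + a - 1) / (\<nu> + a - 1)))" .
    thus "\<bar>(\<omega> u - \<omega> t) / (t - u) powr (1 - a) + (1 - a) * I\<bar> \<le> Kw * (t - u) powr (\<nu> + a - 1) + (1 - a) * (Kw * ((t - u) powr (\<nu> + a - 1) / (\<nu> + a - 1)))"
      using f1 by linarith
  qed (use G in auto)
  also have "\<dots> = CB * (t - u) powr (\<nu> + a - 1)" unfolding CB_def by (simp add: field_simps)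
  finally show ?thesis .
qed

end



context yset begin

definition "cl u = max 0 (min T u)"

lemma cl_in: "cl u \<in> {0..T}" using T unfolding cl_def by auto
lemma cl_id: "u \<in> {0..T} \<Longrightarrow> cl u = u" unfolding cl_def by auto
lemma cl_cont: "continuous_on UNIV cl" unfolding cl_def by (intro continuous_intros)

lemma w_cont: "continuous_on {0..T} \<omega>"
  by (rule hoelder_cont[where \<beta>=\<nu> and K=Kw]) (use nu a hw in auto)
lemma f_cont: "continuous_on {0..T} f"
  by (rule hoelder_cont[where \<beta>="1 - a" and K=Kf]) (use a hf in auto)

lemma wt_borel: "(\<lambda>u. \<omega> (cl u)) \<in> borel_measurable borel"
  by (rule borel_measurable_continuous_onI, rule continuous_on_compose2[OF w_cont cl_cont]) (use cl_in in auto)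
lemma ft_borel: "(\<lambda>u. f (cl u)) \<in> borel_measurable borel"
  by (rule borel_measurable_continuous_onI, rule continuous_on_compose2[OF f_cont cl_cont]) (use cl_in in auto)

lemma Q_int:
  assumes u: "0 \<le> u" "u < t" "t \<le> T"
  shows "(\<lambda>v. (\<omega> u - \<omega> v) / (v - u) powr (2 - a)) integrable_on {u..t}"
proof (rule integrable_via_borel[where gt = "\<lambda>v. (\<omega> (cl u) - \<omega> (cl v)) / (v - u) powr (2 - a)"
      and h = "\<lambda>v. Kw * (v - u) powr (\<nu> + a - 2)"])
  show "(\<lambda>v. (\<omega> (cl u) - \<omega> (cl v)) / (v - u) powr (2 - a)) \<in> borel_measurable borel"
    using wt_borel by measurable
  show "(\<omega> u - \<omega> v) / (v - u) powr (2 - a) = (\<omega> (cl u) - \<omega> (cl v)) / (v - u) powr (2 - a)" if "v \<in> {u<..<t}" for v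
    using that u by (simp add: cl_id)
  show "norm ((\<omega> u - \<omega> v) / (v - u) powr (2 - a)) \<le> Kw * (v - u) powr (\<nu> + a - 2)" if "v \<in> {u<..<t}" for v
    using q_bound[of u v] that u by (simp add: abs_divide)
  have "(\<lambda>v. Kw * (v - u) powr (\<nu> + a - 2)) integrable_on {u..t}"
    using has_integral_mult_right[OF pow_int_left[of "\<nu> + a - 2" u t], of Kw] nu u by (auto simp: has_integral_integrable)
  thus "(\<lambda>v. Kw * (v - u) powr (\<nu> + a - 2)) integrable_on {u<..<t}"
    by (simp add: integrable_on_open_interval_real)
qed

lemma B_diff:
  assumes u: "0 \<le> u" "u < s" "s < t" "t \<le> T"
  shows "\<bar>frac_right_nosign a \<omega> t u - frac_right_nosign a \<omega> s u\<bar> \<le> Kw / Gamma a * (t - s) powr \<nu> * (s - u) powr (a - 1)"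
proof -
  define Q where "Q = (\<lambda>v. (\<omega> u - \<omega> v) / (v - u) powr (2 - a))"
  define Pt where "Pt = (t - u) powr (a - 1)"
  define Ps where "Ps = (s - u) powr (a - 1)"
  define D where "D = (t - s) powr \<nu>"
  define E where "E = (Ps - Pt) / (1 - a)"
  define R where "R = integral {s..t} (\<lambda>v. (\<omega> s - \<omega> v) * (v - u) powr (a - 2))"
  have QI: "Q integrable_on {u..t}" unfolding Q_def by (rule Q_int) (use u in auto)
  have eqQ: "(\<lambda>v. ((\<omega> u - \<omega> r) - (\<omega> v - \<omega> r)) / (v - u) powr (2 - a)) = Q" for r
    unfolding Q_def by (simp add: algebra_simps)
  have split: "integral {u..t} Q = integral {u..s} Q + integral {s..t} Q"
    by (rule Henstock_Kurzweil_Integration.integral_combine[symmetric]) (use u QI in auto)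
  have cP1: "continuous_on {s..t} (\<lambda>v. (v - u) powr (a - 2))"
    using u by (intro continuous_intros) auto
  have cP2: "continuous_on {s..t} (\<lambda>v. (\<omega> s - \<omega> v) * (v - u) powr (a - 2))"
    by (intro continuous_intros cP1 continuous_on_subset[OF w_cont]) (use u in auto)
  have hE: "((\<lambda>v. (v - u) powr (a - 2)) has_integral E) {s..t}"
  proof -
    have "((\<lambda>v. (v - u) powr (a - 2)) has_integral ((\<lambda>v. - ((v - u) powr (a - 1)) / (1 - a)) t - (\<lambda>v. - ((v - u) powr (a - 1)) / (1 - a)) s)) {s..t}"
    proof (rule fundamental_theorem_of_calculus)
      show "s \<le> t" using u by simp
      fix v assume v: "v \<in> {s..t}"
      have D0: "((\<lambda>v. (v - u) powr (a - 1)) has_real_derivative ((a - 1) * (v - u) powr (a - 1 - 1)) * 1) (at v)"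
      proof -
        have pos: "v - u > 0" using v u by simp
        have d1: "((\<lambda>v. v - u) has_real_derivative 1) (at v)" by (auto intro!: derivative_eq_intros)
        show ?thesis using DERIV_chain2[OF has_real_derivative_powr[OF pos, of "a - 1"] d1] by simp
      qed
      have "((\<lambda>v. - ((v - u) powr (a - 1)) / (1 - a)) has_real_derivative - ((a - 1) * (v - u) powr (a - 1 - 1)) / (1 - a)) (at v)"
        using DERIV_cdivide[OF DERIV_minus[OF D0], of "1 - a"] by simp
      moreover have "- ((a - 1) * (v - u) powr (a - 1 - 1)) / (1 - a) = (v - u) powr (a - 2)"
        using a by (simp add: field_simps)
      ultimately have "((\<lambda>v. - ((v - u) powr (a - 1)) / (1 - a)) has_real_derivative (v - u) powr (a - 2)) (at v within {s..t})"
        by (simp add: has_field_derivative_at_within)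
      thus "((\<lambda>v. - ((v - u) powr (a - 1)) / (1 - a)) has_vector_derivative (v - u) powr (a - 2)) (at v within {s..t})"
        by (simp add: has_real_derivative_iff_has_vector_derivative)
    qed
    moreover have "(\<lambda>v. - ((v - u) powr (a - 1)) / (1 - a)) t - (\<lambda>v. - ((v - u) powr (a - 1)) / (1 - a)) s = E"
      unfolding E_def Ps_def Pt_def by (simp add: diff_divide_distrib)
    ultimately show ?thesis by simp
  qed
  have P2I: "(\<lambda>v. (\<omega> s - \<omega> v) * (v - u) powr (a - 2)) integrable_on {s..t}"
    by (rule integrable_continuous_real[OF cP2])
  have Qst: "integral {s..t} Q = (\<omega> u - \<omega> s) * E + R"
  proof -
    have "integral {s..t} Q = integral {s..t} (\<lambda>v. (\<omega> u - \<omega> s) * (v - u) powr (a - 2) + (\<omega> s - \<omega> v) * (v - u) powr (a - 2))"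
    proof (rule integral_cong)
      fix v assume v: "v \<in> {s..t}"
      have eq: "(v - u) powr (a - 2) = 1 / (v - u) powr (2 - a)"
        using powr_minus_divide[of "v - u" "2 - a"] by simp
      have "Q v = ((\<omega> u - \<omega> s) + (\<omega> s - \<omega> v)) * (1 / (v - u) powr (2 - a))"
        unfolding Q_def by simp
      also have "\<dots> = (\<omega> u - \<omega> s) * (v - u) powr (a - 2) + (\<omega> s - \<omega> v) * (v - u) powr (a - 2)"
        by (simp only: eq[symmetric] distrib_right)
      finally show "Q v = (\<omega> u - \<omega> s) * (v - u) powr (a - 2) + (\<omega> s - \<omega> v) * (v - u) powr (a - 2)" .
    qed
    also have "\<dots> = (\<omega> u - \<omega> s) * E + R"
      unfolding R_def
      by (subst integral_add) (use has_integral_mult_right[OF hE, of "\<omega> u - \<omega> s"] integral_unique[OF hE] P2I in \<open>auto simp: integral_unique has_integral_integrable\<close>)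
    finally show ?thesis .
  qed
  have Rb: "\<bar>R\<bar> \<le> Kw * D * E"
  proof -
    have hK: "((\<lambda>v. Kw * D * (v - u) powr (a - 2)) has_integral Kw * D * E) {s..t}"
      by (rule has_integral_mult_right[OF hE])
    have "norm R \<le> integral {s..t} (\<lambda>v. Kw * D * (v - u) powr (a - 2))"
      unfolding R_def
    proof (rule norm_int_bound)
      fix v assume v: "v \<in> {s..t}"
      have "\<bar>\<omega> s - \<omega> v\<bar> \<le> Kw * \<bar>v - s\<bar> powr \<nu>" using hw[of s v] v u by (simp add: abs_minus_commute)
      also have "\<dots> \<le> Kw * D" unfolding D_def using v Kw nu a by (intro mult_left_mono powr_mono2) auto
      finally have "\<bar>\<omega> s - \<omega> v\<bar> * (v - u) powr (a - 2) \<le> Kw * D * (v - u) powr (a - 2)"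
        by (intro mult_right_mono) auto
      thus "norm ((\<omega> s - \<omega> v) * (v - u) powr (a - 2)) \<le> Kw * D * (v - u) powr (a - 2)"
        by (simp add: abs_mult)
    qed (use hK in \<open>simp add: has_integral_integrable\<close>)
    thus ?thesis using integral_unique[OF hK] integral_unique[OF hE] by simp
  qed
  have G: "Gamma a > 0" using a by (intro Gamma_real_pos) auto
  have dt: "x / (t - u) powr (1 - a) = x * Pt" for x
    unfolding Pt_def using powr_minus_divide[of "t - u" "1 - a"] by (simp add: divide_inverse)
  have ds: "x / (s - u) powr (1 - a) = x * Ps" for x
    unfolding Ps_def using powr_minus_divide[of "s - u" "1 - a"] by (simp add: divide_inverse)
  have Bt: "frac_right_nosign a \<omega> t u = ((\<omega> u - \<omega> t) * Pt + (1 - a) * (integral {u..s} Q + (\<omega> u - \<omega> s) * E + R)) / Gamma a"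
    unfolding frac_right_nosign_def eqQ dt split Qst by simp
  have Bs: "frac_right_nosign a \<omega> s u = ((\<omega> u - \<omega> s) * Ps + (1 - a) * integral {u..s} Q) / Gamma a"
    unfolding frac_right_nosign_def eqQ ds by simp
  have E1: "(1 - a) * E = Ps - Pt" unfolding E_def using a by simp
  have diff: "frac_right_nosign a \<omega> t u - frac_right_nosign a \<omega> s u = ((\<omega> s - \<omega> t) * Pt + (1 - a) * R) / Gamma a"
  proof -
    let ?I = "integral {u..s} Q"
    have "((\<omega> u - \<omega> t) * Pt + (1 - a) * (?I + (\<omega> u - \<omega> s) * E + R)) - ((\<omega> u - \<omega> s) * Ps + (1 - a) * ?I)
        = (\<omega> u - \<omega> t) * Pt + (\<omega> u - \<omega> s) * ((1 - a) * E) + (1 - a) * R - (\<omega> u - \<omega> s) * Ps"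
      by (simp add: algebra_simps)
    also have "\<dots> = (\<omega> s - \<omega> t) * Pt + (1 - a) * R" unfolding E1 by (simp add: algebra_simps)
    finally show ?thesis unfolding Bt Bs diff_divide_distrib[symmetric] by simp
  qed
  have Pt0: "Pt \<ge> 0" "Ps \<ge> 0" unfolding Pt_def Ps_def by auto
  have PtPs: "Pt \<le> Ps" unfolding Pt_def Ps_def using u a by (intro powr_mono2') auto
  have w1: "\<bar>(\<omega> s - \<omega> t) * Pt\<bar> \<le> Kw * D * Pt"
  proof -
    have "\<bar>\<omega> s - \<omega> t\<bar> \<le> Kw * D" using hw[of t s] u unfolding D_def by (simp add: abs_minus_commute)
    thus ?thesis using Pt0 by (simp add: abs_mult mult_right_mono)
  qed
  have w2: "\<bar>(1 - a) * R\<bar> \<le> Kw * D * (Ps - Pt)"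
  proof -
    have "\<bar>(1 - a) * R\<bar> = (1 - a) * \<bar>R\<bar>" using a by (simp add: abs_mult)
    also have "\<dots> \<le> (1 - a) * (Kw * D * E)" using Rb a by (intro mult_left_mono) auto
    also have "\<dots> = Kw * D * (Ps - Pt)" by (simp only: E1[symmetric]) (simp add: algebra_simps)
    finally show ?thesis .
  qed
  have "\<bar>(\<omega> s - \<omega> t) * Pt + (1 - a) * R\<bar> \<le> Kw * D * Ps"
    using w1 w2 by (simp add: algebra_simps)
  hence "\<bar>((\<omega> s - \<omega> t) * Pt + (1 - a) * R) / Gamma a\<bar> \<le> Kw * D * Ps / Gamma a"
    using G by (simp add: abs_divide divide_right_mono)
  thus ?thesis unfolding diff D_def Ps_def by (simp add: field_simps)
qed

end



lemma absint_via_borel: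
  fixes gt :: "real \<Rightarrow> 'b::euclidean_space"
  assumes "gt \<in> borel_measurable borel" "\<And>x. x \<in> {a..b} \<Longrightarrow> norm (gt x) \<le> h x" "h integrable_on {a..b}"
  shows "gt absolutely_integrable_on {a..b}"
  by (rule measurable_bounded_by_integrable_imp_absolutely_integrable[OF borel_lebesgue_on[OF assms(1)] _ assms(3)])
     (use assms(2) in auto)

context yset begin

definition "ft u = f (cl u)"
definition "wt u = \<omega> (cl u)"

lemma ft_b[measurable]: "ft \<in> borel_measurable lborel"
  using ft_borel unfolding ft_def by (simp add: measurable_lborel1)
lemma wt_b[measurable]: "wt \<in> borel_measurable lborel"
  using wt_borel unfolding wt_def by (simp add: measurable_lborel1)

definition "kt u v = (1 / (u - v) powr (1 + a)) *\<^sub>R (ft u - ft v)"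
definition "Phi u = (LINT v|lborel. indicator {0..u} v *\<^sub>R kt u v)"
definition "At u = (1 / Gamma (1 - a)) *\<^sub>R ((1 / (u - 0) powr a) *\<^sub>R ft u + a *\<^sub>R Phi u)"
definition "qt t u v = ((wt u - wt t) - (wt v - wt t)) / (v - u) powr (2 - a)"
definition "Psi t u = (LINT v|lborel. indicator {u..t} v *\<^sub>R qt t u v)"
definition "Bt t u = (1 / Gamma a) * ((wt u - wt t) / (t - u) powr (1 - a) + (1 - a) * Psi t u)"

lemma Phi_borel: "Phi \<in> borel_measurable borel"
proof -
  have "(\<lambda>(u, v). indicator {0..u} v *\<^sub>R kt u v) \<in> borel_measurable (lborel \<Otimes>\<^sub>M lborel)"
    unfolding kt_def indicator_def atLeastAtMost_iff by measurable
  from param_meas[OF this] show ?thesis unfolding Phi_def by simp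
qed

lemma Psi_borel: "Psi t \<in> borel_measurable borel"
proof -
  have "(\<lambda>(u, v). indicator {u..t} v *\<^sub>R qt t u v) \<in> borel_measurable (lborel \<Otimes>\<^sub>M lborel)"
    unfolding qt_def indicator_def atLeastAtMost_iff by measurable
  from param_meas[OF this] show ?thesis unfolding Psi_def by simp
qed

lemma gt_borel: "(\<lambda>u. Bt t u *\<^sub>R At u) \<in> borel_measurable borel"
proof -
  have [measurable]: "Phi \<in> borel_measurable lborel" "Psi t \<in> borel_measurable lborel"
    using Phi_borel Psi_borel by (simp_all add: measurable_lborel1)
  have "(\<lambda>u. Bt t u *\<^sub>R At u) \<in> borel_measurable lborel"
    unfolding Bt_def At_def by measurable
  thus ?thesis by (simp add: measurable_lborel1)
qed

lemma A_eq:
  assumes u: "0 < u" "u \<le> T"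
  shows "frac_left a f 0 u = At u"
proof -
  have kb: "(\<lambda>v. kt u v) \<in> borel_measurable borel"
  proof -
    have "(\<lambda>v. kt u v) \<in> borel_measurable lborel" unfolding kt_def by measurable
    thus ?thesis by (simp add: measurable_lborel1)
  qed
  have eqk: "kt u v = (1 / (u - v) powr (1 + a)) *\<^sub>R (f u - f v)" if "v \<in> {0..u}" for v
    unfolding kt_def ft_def using that u by (simp add: cl_id)
  have hi: "(\<lambda>v. Kf * (u - v) powr (- 2 * a)) integrable_on {0..u}"
    using has_integral_mult_right[OF pow_int_right[of "- 2 * a" 0 u], of Kf] a u by (auto simp: has_integral_integrable)
  have ai: "(\<lambda>v. kt u v) absolutely_integrable_on {0..u}"
    by (rule absint_via_borel[OF kb _ hi]) (use eqk k_bound u in auto)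
  have "integral {0..u} (\<lambda>v. (1 / (u - v) powr (1 + a)) *\<^sub>R (f u - f v)) = integral {0..u} (\<lambda>v. kt u v)"
    by (rule integral_cong) (use eqk in auto)
  also have "\<dots> = Phi u" unfolding Phi_def by (rule HK_eq_lborel[OF kb ai])
  finally show ?thesis unfolding frac_left_def At_def ft_def using u by (simp add: cl_id)
qed

lemma B_eq:
  assumes u: "0 \<le> u" "u < t" "t \<le> T"
  shows "frac_right_nosign a \<omega> t u = Bt t u"
proof -
  have qb: "(\<lambda>v. qt t u v) \<in> borel_measurable borel"
  proof -
    have "(\<lambda>v. qt t u v) \<in> borel_measurable lborel" unfolding qt_def by measurable
    thus ?thesis by (simp add: measurable_lborel1)
  qed
  have eqq: "qt t u v = ((\<omega> u - \<omega> t) - (\<omega> v - \<omega> t)) / (v - u) powr (2 - a)" if "v \<in> {u..t}" for v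
    unfolding qt_def wt_def using that u by (simp add: cl_id)
  have hi: "(\<lambda>v. Kw * (v - u) powr (\<nu> + a - 2)) integrable_on {u..t}"
    using has_integral_mult_right[OF pow_int_left[of "\<nu> + a - 2" u t], of Kw] nu u by (auto simp: has_integral_integrable)
  have ai: "(\<lambda>v. qt t u v) absolutely_integrable_on {u..t}"
  proof (rule absint_via_borel[OF qb _ hi])
    fix v assume v: "v \<in> {u..t}"
    show "norm (qt t u v) \<le> Kw * (v - u) powr (\<nu> + a - 2)"
      using q_bound[of u v] eqq[OF v] v u by (simp add: abs_divide)
  qed
  have "integral {u..t} (\<lambda>v. ((\<omega> u - \<omega> t) - (\<omega> v - \<omega> t)) / (v - u) powr (2 - a)) = integral {u..t} (\<lambda>v. qt t u v)"
    by (rule integral_cong) (use eqq in auto)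
  also have "\<dots> = Psi t u" unfolding Psi_def by (rule HK_eq_lborel[OF qb ai])
  finally show ?thesis unfolding frac_right_nosign_def Bt_def wt_def using u by (simp add: cl_id)
qed

lemma g_int:
  assumes t: "0 < t" "t \<le> T"
  shows "(\<lambda>u. frac_right_nosign a \<omega> t u *\<^sub>R frac_left a f 0 u) integrable_on {0..t}"
proof (rule integrable_via_borel[OF gt_borel[of t]])
  fix u assume u: "u \<in> {0<..<t}"
  show "frac_right_nosign a \<omega> t u *\<^sub>R frac_left a f 0 u = Bt t u *\<^sub>R At u"
    using A_eq[of u] B_eq[of u t] u t by auto
  have "norm (frac_right_nosign a \<omega> t u *\<^sub>R frac_left a f 0 u) = \<bar>frac_right_nosign a \<omega> t u\<bar> * norm (frac_left a f 0 u)"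
    by simp
  also have "\<dots> \<le> (CB * (t - u) powr (\<nu> + a - 1)) * (CA * u powr (- a))"
    using B_bound[of u t] A_bound[of u] u t by (intro mult_mono) auto
  also have "\<dots> \<le> (CB * T powr (\<nu> + a - 1)) * (CA * u powr (- a))"
    using u t nu CA_nonneg CB_nonneg by (intro mult_right_mono mult_left_mono powr_mono2) auto
  finally show "norm (frac_right_nosign a \<omega> t u *\<^sub>R frac_left a f 0 u) \<le> (CB * T powr (\<nu> + a - 1) * CA) * u powr (- a)"
    by (simp add: mult.assoc)
next
  have "(\<lambda>u. (CB * T powr (\<nu> + a - 1) * CA) * u powr (- a)) integrable_on {0..t}"
    using has_integral_mult_right[OF has_integral_powr_from_0[of "- a" t], of "CB * T powr (\<nu> + a - 1) * CA"] a t
    by (auto simp: has_integral_integrable)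
  thus "(\<lambda>u. (CB * T powr (\<nu> + a - 1) * CA) * u powr (- a)) integrable_on {0<..<t}"
    by (simp add: integrable_on_open_interval_real)
qed

end



context yset begin

definition "g t u = frac_right_nosign a \<omega> t u *\<^sub>R frac_left a f 0 u"

lemma tail:
  assumes st: "0 \<le> s" "s < t" "t \<le> T"
  shows "norm (integral {s..t} (g t)) \<le> CA * CB / (1 - a) * (t - s) powr \<nu>"
proof -
  define c where "c = CA * CB * (t - s) powr (\<nu> + a - 1)"
  have hc: "((\<lambda>u. c * (u - s) powr (- a)) has_integral c * ((t - s) powr (- a + 1) / (- a + 1))) {s..t}"
    using has_integral_mult_right[OF pow_int_left[of "- a" s t], of c] a st by simp
  have "norm (integral {s..t} (g t)) = norm (integral {s<..<t} (g t))"
    by (simp add: integral_open_interval_real)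
  also have "\<dots> \<le> integral {s<..<t} (\<lambda>u. c * (u - s) powr (- a))"
  proof (rule norm_int_bound)
    fix u assume u: "u \<in> {s<..<t}"
    have "norm (g t u) = \<bar>frac_right_nosign a \<omega> t u\<bar> * norm (frac_left a f 0 u)"
      unfolding g_def by simp
    also have "\<dots> \<le> (CB * (t - u) powr (\<nu> + a - 1)) * (CA * u powr (- a))"
      using B_bound[of u t] A_bound[of u] u st by (intro mult_mono) auto
    also have "\<dots> \<le> (CB * (t - s) powr (\<nu> + a - 1)) * (CA * (u - s) powr (- a))"
      using u st nu a CA_nonneg CB_nonneg
      by (intro mult_mono mult_left_mono powr_mono2 powr_mono2') auto
    also have "\<dots> = c * (u - s) powr (- a)" unfolding c_def by simp
    finally show "norm (g t u) \<le> c * (u - s) powr (- a)" .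
  next
    show "(\<lambda>u. c * (u - s) powr (- a)) integrable_on {s<..<t}"
      using hc by (simp add: integrable_on_open_interval_real has_integral_integrable)
  qed
  also have "\<dots> = c * ((t - s) powr (1 - a) / (1 - a))"
    using integral_unique[OF hc] by (simp add: integral_open_interval_real[symmetric])
  also have "\<dots> = CA * CB / (1 - a) * ((t - s) powr (\<nu> + a - 1) * (t - s) powr (1 - a))"
    unfolding c_def by simp
  also have "(t - s) powr (\<nu> + a - 1) * (t - s) powr (1 - a) = (t - s) powr \<nu>"
    by (simp add: powr_add[symmetric])
  finally show ?thesis .
qed

lemma head:
  assumes st: "0 < s" "s < t" "t \<le> T"
  shows "norm (integral {0..s} (\<lambda>u. g t u - g s u)) \<le> CA * Kw / Gamma a * Beta (1 - a) a * (t - s) powr \<nu>"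
proof -
  define c where "c = CA * Kw / Gamma a * (t - s) powr \<nu>"
  have hc: "((\<lambda>u. c * (u powr (- a) * (s - u) powr (a - 1))) has_integral c * Beta (1 - a) a) {0..s}"
    using has_integral_mult_right[OF beta_int[of a s], of c] a st by simp
  have G: "Gamma a > 0" using a by (intro Gamma_real_pos) auto
  have "norm (integral {0..s} (\<lambda>u. g t u - g s u)) = norm (integral {0<..<s} (\<lambda>u. g t u - g s u))"
    by (simp add: integral_open_interval_real)
  also have "\<dots> \<le> integral {0<..<s} (\<lambda>u. c * (u powr (- a) * (s - u) powr (a - 1)))"
  proof (rule norm_int_bound)
    fix u assume u: "u \<in> {0<..<s}"
    have "g t u - g s u = (frac_right_nosign a \<omega> t u - frac_right_nosign a \<omega> s u) *\<^sub>R frac_left a f 0 u"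
      unfolding g_def by (simp add: scaleR_diff_left)
    hence "norm (g t u - g s u) = \<bar>frac_right_nosign a \<omega> t u - frac_right_nosign a \<omega> s u\<bar> * norm (frac_left a f 0 u)"
      by simp
    also have "\<dots> \<le> (Kw / Gamma a * (t - s) powr \<nu> * (s - u) powr (a - 1)) * (CA * u powr (- a))"
      using B_diff[of u s t] A_bound[of u] u st by (intro mult_mono) auto
    also have "\<dots> = c * (u powr (- a) * (s - u) powr (a - 1))" unfolding c_def by simp
    finally show "norm (g t u - g s u) \<le> c * (u powr (- a) * (s - u) powr (a - 1))" .
  next
    show "(\<lambda>u. c * (u powr (- a) * (s - u) powr (a - 1))) integrable_on {0<..<s}"
      using hc by (simp add: integrable_on_open_interval_real has_integral_integrable)
  qed
  also have "\<dots> = c * Beta (1 - a) a"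
    using integral_unique[OF hc] by (simp add: integral_open_interval_real[symmetric])
  finally show ?thesis unfolding c_def by (simp add: mult_ac)
qed

lemma J_eq: "young_integral a f \<omega> 0 t = - integral {0..t} (g t)"
  unfolding young_integral_def g_def by simp

lemma young_main: "hoelder0 (1 - a) 0 T (\<lambda>t. young_integral a f \<omega> 0 t)"
proof -
  define C where "C = CA * CB / (1 - a) + CA * Kw / Gamma a * Beta (1 - a) a"
  have G: "Gamma a > 0" using a by (intro Gamma_real_pos) auto
  have Bpos: "Beta (1 - a) a \<ge> 0" using a by (simp add: Beta_def Gamma_real_pos less_imp_le)
  have C1: "CA * CB / (1 - a) \<ge> 0" using CA_nonneg CB_nonneg a by simp
  have C2: "CA * Kw / Gamma a * Beta (1 - a) a \<ge> 0" using CA_nonneg Kw G Bpos by simp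
  have C0: "C \<ge> 0" unfolding C_def using C1 C2 by simp
  have J0: "young_integral a f \<omega> 0 0 = 0" unfolding J_eq by simp
  have inc: "norm (young_integral a f \<omega> 0 t - young_integral a f \<omega> 0 s) \<le> C * (t - s) powr \<nu>"
    if st: "0 \<le> s" "s < t" "t \<le> T" for s t
  proof (cases "s = 0")
    case True
    have "norm (young_integral a f \<omega> 0 t - young_integral a f \<omega> 0 s) = norm (integral {s..t} (g t))"
      unfolding J_eq using True by simp
    also have "\<dots> \<le> CA * CB / (1 - a) * (t - s) powr \<nu>" by (rule tail[OF st])
    also have "\<dots> \<le> C * (t - s) powr \<nu>" unfolding C_def using C2 by (intro mult_right_mono) auto
    finally show ?thesis .
  next
    case False
    hence s0: "0 < s" using st by simp
    have git: "g t integrable_on {0..t}" unfolding g_def by (rule g_int) (use st in auto)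
    have gis: "g s integrable_on {0..s}" unfolding g_def by (rule g_int) (use st s0 in auto)
    have gits: "g t integrable_on {0..s}" by (rule integrable_subinterval_real[OF git]) (use st in auto)
    have "integral {0..t} (g t) = integral {0..s} (g t) + integral {s..t} (g t)"
      by (rule Henstock_Kurzweil_Integration.integral_combine[symmetric]) (use st git in auto)
    moreover have "integral {0..s} (\<lambda>u. g t u - g s u) = integral {0..s} (g t) - integral {0..s} (g s)"
      by (rule integral_diff[OF gits gis])
    ultimately have "young_integral a f \<omega> 0 t - young_integral a f \<omega> 0 s
        = - (integral {0..s} (\<lambda>u. g t u - g s u) + integral {s..t} (g t))"
      unfolding J_eq by (simp add: algebra_simps)
    hence "norm (young_integral a f \<omega> 0 t - young_integral a f \<omega> 0 s)
        = norm (integral {0..s} (\<lambda>u. g t u - g s u) + integral {s..t} (g t))"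
      by (simp only: norm_minus_cancel)
    also have "\<dots> \<le> norm (integral {0..s} (\<lambda>u. g t u - g s u)) + norm (integral {s..t} (g t))"
      by (rule norm_triangle_ineq)
    also have "\<dots> \<le> CA * Kw / Gamma a * Beta (1 - a) a * (t - s) powr \<nu> + CA * CB / (1 - a) * (t - s) powr \<nu>"
      using head[OF s0 st(2,3)] tail[OF st] by linarith
    also have "\<dots> = C * (t - s) powr \<nu>" unfolding C_def by (simp add: algebra_simps)
    finally show ?thesis .
  qed
  have bd: "norm (young_integral a f \<omega> 0 t) \<le> C * T powr \<nu>" if "0 \<le> t" "t \<le> T" for t
  proof (cases "t = 0")
    case True thus ?thesis using J0 C0 by simp
  next
    case False
    hence "norm (young_integral a f \<omega> 0 t) \<le> C * (t - 0) powr \<nu>"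
      using inc[of 0 t] that J0 by simp
    also have "\<dots> \<le> C * T powr \<nu>" using that C0 nu a by (intro mult_left_mono powr_mono2) auto
    finally show ?thesis .
  qed
  show ?thesis
    by (rule hoelder0_of_bound[OF T _ _ C0 inc bd]) (use a nu in auto)
qed

end


theorem proposition1:
  fixes r T H \<nu> \<alpha> :: real
    and F G :: "(real \<Rightarrow> 'a::euclidean_space) \<Rightarrow> 'a"
    and DG :: "(real \<Rightarrow> 'a) \<Rightarrow> (real \<Rightarrow> 'a) \<Rightarrow> 'a"
    and \<omega> :: "real \<Rightarrow> real"
    and x :: "real \<Rightarrow> 'a"
  assumes r: "r > 0" and T: "T > 0"
    and H: "1/2 < H" "H < 1"
    and nu: "1/2 < \<nu>" "\<nu> < H"
    and alpha: "1 - \<nu> < \<alpha>" "\<alpha> < 1/2"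
    and F_hyp: "\<exists>L1>0. \<exists>L2>0. \<forall>\<xi>\<in>Cr r. \<forall>\<eta>\<in>Cr r.
        norm (F \<xi> - F \<eta>) \<le> L1 * supn r (\<lambda>\<theta>. \<xi> \<theta> - \<eta> \<theta>) \<and>
        norm (F \<xi>) \<le> L2 * (1 + supn r \<xi>)"
    and G_C1: "frechet_C1_on_Cr r G DG"
    and G_hyp: "\<exists>L3>0. \<exists>L4>0. \<forall>\<xi>\<in>Cr r. \<forall>\<eta>\<in>Cr r.
        (\<forall>h\<in>Cr r. norm (DG \<xi> h) \<le> L3 * supn r h) \<and>
        (\<forall>h\<in>Cr r. norm (DG \<xi> h - DG \<eta> h) \<le> L4 * supn r (\<lambda>\<theta>. \<xi> \<theta> - \<eta> \<theta>) * supn r h)"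
    and omega: "hoelder \<nu> 0 T \<omega>"
    and x: "hoelder0 (1 - \<alpha>) (-r) T x"
  shows "hoelder0 (1 - \<alpha>) 0 T (\<lambda>t. integral {0..t} (\<lambda>s. F (segment x s)))
       \<and> hoelder0 (1 - \<alpha>) 0 T (\<lambda>t. young_integral \<alpha> (\<lambda>s. G (segment x s)) \<omega> 0 t)"
proof
  have b: "0 < 1 - \<alpha>" "1 - \<alpha> < 1" using alpha nu H by auto
  obtain Kx where Kx0: "Kx \<ge> 0" and Kx: "\<And>s t. -r \<le> s \<Longrightarrow> s \<le> T \<Longrightarrow> -r \<le> t \<Longrightarrow> t \<le> T \<Longrightarrow> norm (x t - x s) \<le> Kx * \<bar>t - s\<bar> powr (1 - \<alpha>)"
    using hoelder_get[of "1 - \<alpha>" "-r" T x] x unfolding hoelder0_def by blast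
  have Kx': "\<And>s t. s \<in> {-r..T} \<Longrightarrow> t \<in> {-r..T} \<Longrightarrow> norm (x t - x s) \<le> Kx * \<bar>t - s\<bar> powr (1 - \<alpha>)"
    using Kx by auto
  obtain L1 where L1: "L1 > 0" "\<And>\<xi> \<eta>. \<xi> \<in> Cr r \<Longrightarrow> \<eta> \<in> Cr r \<Longrightarrow> norm (F \<xi> - F \<eta>) \<le> L1 * supn r (\<lambda>\<theta>. \<xi> \<theta> - \<eta> \<theta>)"
    using F_hyp by blast
  show "hoelder0 (1 - \<alpha>) 0 T (\<lambda>t. integral {0..t} (\<lambda>s. F (segment x s)))"
    by (rule partI[OF r T b Kx' L1(2)]) (use L1 in auto)
  obtain L3 where L3: "L3 > 0" "\<And>\<xi> h. \<xi> \<in> Cr r \<Longrightarrow> h \<in> Cr r \<Longrightarrow> norm (DG \<xi> h) \<le> L3 * supn r h"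
    using G_hyp by blast
  define f where "f = (\<lambda>s. G (segment x s))"
  have hf: "norm (f t - f s) \<le> (L3 * Kx) * \<bar>t - s\<bar> powr (1 - \<alpha>)" if "s \<in> {0..T}" "t \<in> {0..T}" for s t
  proof -
    have "norm (f t - f s) \<le> L3 * supn r (\<lambda>\<theta>. segment x t \<theta> - segment x s \<theta>)"
      unfolding f_def by (rule G_lip[OF r G_C1 L3(2)]) (use seg_facts(1)[OF r b(1) Kx'] that in auto)
    also have "\<dots> \<le> L3 * (Kx * \<bar>t - s\<bar> powr (1 - \<alpha>))"
      by (intro mult_left_mono seg_facts(2)[OF r b(1) Kx']) (use that L3 in auto)
    finally show ?thesis by simp
  qed
  have cf: "continuous_on {0..T} f" by (rule hoelder_cont[OF b(1) hf])
  obtain M where M: "\<And>s. s \<in> {0..T} \<Longrightarrow> norm (f s) \<le> M"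
    using compact_imp_bounded[OF compact_continuous_image[OF cf compact_Icc]] unfolding bounded_iff by (metis atLeastAtMost_iff image_eqI)
  obtain Kw where Kw0: "Kw \<ge> 0" and Kw: "\<And>s t. 0 \<le> s \<Longrightarrow> s \<le> T \<Longrightarrow> 0 \<le> t \<Longrightarrow> t \<le> T \<Longrightarrow> norm (\<omega> t - \<omega> s) \<le> Kw * \<bar>t - s\<bar> powr \<nu>"
    using hoelder_get[OF omega] by blast
  have ys: "yset f \<omega> \<alpha> \<nu> T (L3 * Kx) (max M 0) Kw"
  proof
    show "T > 0" "0 < \<alpha>" "\<alpha> < 1/2" "1 - \<alpha> < \<nu>" "\<nu> < 1" using T alpha nu H by auto
    show "L3 * Kx \<ge> 0" using L3 Kx0 by simp
    show "max M 0 \<ge> 0" by simp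
    show "Kw \<ge> 0" by (rule Kw0)
    show "\<And>s t. s \<in> {0..T} \<Longrightarrow> t \<in> {0..T} \<Longrightarrow> norm (f t - f s) \<le> L3 * Kx * \<bar>t - s\<bar> powr (1 - \<alpha>)" by (rule hf)
    show "\<And>t. t \<in> {0..T} \<Longrightarrow> norm (f t) \<le> max M 0" using M by (meson max.coboundedI1)
    show "\<And>s t. s \<in> {0..T} \<Longrightarrow> t \<in> {0..T} \<Longrightarrow> \<bar>\<omega> t - \<omega> s\<bar> \<le> Kw * \<bar>t - s\<bar> powr \<nu>" using Kw by auto
  qed
  show "hoelder0 (1 - \<alpha>) 0 T (\<lambda>t. young_integral \<alpha> (\<lambda>s. G (segment x s)) \<omega> 0 t)"
    using yset.young_main[OF ys] unfolding f_def .
qed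

end
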